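(* Define $a_0 = 0$ and $a_n = \sum_{k=0}^{n-1} k!\,(n-k-1)!$ for $n \geq 1$. Then for every natural number $n$, $$a_n = (-1)^{n-1} \sum_{k=0}^{n} G_k\, s(n,k).$$
   Context: The Genocchi numbers $G_n$ ($n \in \mathbb{N}$) are defined by the exponential generating function $\frac{2x}{e^x+1} = \sum_{n=0}^{\infty} G_n \frac{x^n}{n!}$. The (signed) Stirling numbers of the first kind $s(n,k)$ ($0 \le k \le n$) are the integers defined by the polynomial identity $X(X-1)\cdots(X-n+1) = \sum_{k=0}^{n} s(n,k) X^k$. *)

theory Defs
  imports "HOL-Computational_Algebra.Computational_Algebra"
begin

definition genocchi_egf :: "rat fps" where
  "genocchi_egf = (2 * fps_X) / (fps_exp 1 + 1)"

definition genocchi :: "nat \<Rightarrow> rat" where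
  "genocchi n = fact n * fps_nth genocchi_egf n"

definition stirling1s :: "nat \<Rightarrow> nat \<Rightarrow> int" where
  "stirling1s n k = coeff (\<Prod>i<n. [:- of_nat i, 1:]) k"

definition seq_a :: "nat \<Rightarrow> nat" where
  "seq_a n = (if n = 0 then 0 else (\<Sum>k=0..n-1. fact k * fact (n - k - 1)))"

end

theory Submission
  imports Defs
begin

lemma gen_mult: "genocchi_egf * (fps_exp 1 + 1) = 2 * fps_X"
proof -
  have "(fps_exp (1::rat) + 1) $ 0 \<noteq> 0" by simp
  then show ?thesis unfolding genocchi_egf_def
    by (simp add: fps_divide_unit mult.assoc inverse_mult_eq_1)
qed

lemma twoX: "(2 * fps_X :: rat fps) $ k = (if k = 1 then 2 else 0)"
  by (simp add: numeral_fps_const fps_X_def)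

lemma gen_rec: "(\<Sum>j\<le>k. of_nat (k choose j) * genocchi j) + genocchi k = (if k = 1 then 2 else 0)"
proof -
  have "(genocchi_egf * (fps_exp 1 + 1)) $ k = (2 * fps_X :: rat fps) $ k" by (simp add: gen_mult)
  hence "(\<Sum>j\<le>k. genocchi_egf $ j / fact (k - j)) + genocchi_egf $ k = (if k = 1 then 2 else 0)"
    unfolding twoX by (simp add: distrib_left fps_mult_nth atLeast0AtMost)
  hence "fact k * ((\<Sum>j\<le>k. genocchi_egf $ j / fact (k - j)) + genocchi_egf $ k) = fact k * (if k = 1 then 2 else 0)"
    by simp
  moreover have "fact k * ((\<Sum>j\<le>k. genocchi_egf $ j / fact (k - j)) + genocchi_egf $ k) =
     (\<Sum>j\<le>k. of_nat (k choose j) * genocchi j) + genocchi k"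
  proof -
    have "fact k * (genocchi_egf $ j / fact (k - j)) = of_nat (k choose j) * genocchi j" if "j \<le> k" for j
    proof -
      have "(of_nat (k choose j) :: rat) = fact k / (fact j * fact (k - j))" using binomial_fact[OF that] .
      thus ?thesis unfolding genocchi_def by (simp add: field_simps)
    qed
    thus ?thesis by (simp add: distrib_left sum_distrib_left genocchi_def)
  qed
  ultimately show ?thesis by simp
qed

lemma map_of_int_mult: "map_poly (of_int :: int \<Rightarrow> rat) (p * q) = map_poly of_int p * map_poly of_int q"
  by (simp add: poly_eq_iff coeff_map_poly coeff_mult)

definition P :: "nat \<Rightarrow> rat poly" where "P n = (\<Prod>i<n. [:- of_nat i, 1:])"

lemma P_map: "P n = map_poly of_int (\<Prod>i<n. [:- of_nat i, 1:])"
proof (induction n)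
  case 0 then show ?case by (simp add: P_def)
next
  case (Suc n)
  have "map_poly (of_int :: int \<Rightarrow> rat) (\<Prod>i<Suc n. [:- of_nat i, 1:]) =
     map_poly of_int (\<Prod>i<n. [:- of_nat i, 1:]) * map_poly of_int [:- of_nat n, 1:]"
    by (simp only: prod.lessThan_Suc map_of_int_mult)
  moreover have "map_poly (of_int :: int \<Rightarrow> rat) [:- of_nat n, 1:] = [:- of_nat n, 1:]"
    by (simp add: map_poly_pCons)
  ultimately show ?case using Suc unfolding P_def by (simp only: prod.lessThan_Suc)
qed

lemma stir: "of_int (stirling1s n k) = coeff (P n) k"
  by (simp add: P_map stirling1s_def coeff_map_poly)

lemma P_deg: "degree (P n) \<le> n"
proof -
  have "degree (P n) \<le> sum (degree \<circ> (\<lambda>i. [:- of_nat i, 1:] :: rat poly)) {..<n}"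
    unfolding P_def by (rule degree_prod_sum_le) simp
  thus ?thesis by simp
qed

lemma P_Suc: "P (Suc n) = [:- of_nat n, 1:] * P n"
  by (simp add: P_def mult.commute)

lemma P_coeff0: "coeff (P (Suc n)) 0 = 0"
  by (induction n) (simp_all add: P_Suc[of "Suc _"] P_Suc[of 0] P_def)

lemma P_coeff1: "coeff (P (Suc n)) 1 = (-1)^n * fact n"
proof (induction n)
  case 0 then show ?case by (simp add: P_def)
next
  case (Suc n)
  have "coeff (P (Suc (Suc n))) 1 = - of_nat (Suc n) * coeff (P (Suc n)) 1 + coeff (P (Suc n)) 0"
    by (simp add: P_Suc[of "Suc n"] del: of_nat_Suc)
  then show ?case using Suc P_coeff0 by (simp add: algebra_simps)
qed

lemma P_shift: "pcompose (P (Suc n)) [:1,1:] = P (Suc n) + smult (of_nat (Suc n)) (P n)"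
proof -
  have e1: "pcompose (P (Suc n)) [:1,1:] = (\<Prod>i<Suc n. [:1 - of_nat i, 1:])"
    unfolding P_def pcompose_prod by (intro prod.cong) (simp_all add: pcompose_pCons)
  have e2: "(\<Prod>i<Suc n. [:1 - of_nat i, 1:]) = [:1,1:] * P n"
    unfolding P_def prod.lessThan_Suc_shift by simp
  have e3: "[:1,1:] = ([:- of_nat n, 1:] :: rat poly) + [:of_nat (Suc n):]" by (simp add: algebra_simps)
  have e4: "[:1,1:] * P n = [:- of_nat n, 1:] * P n + [:of_nat (Suc n):] * P n"
    by (subst e3) (simp only: distrib_right)
  show ?thesis unfolding e1 e2 e4 P_Suc[symmetric] by simp
qed

definition L :: "rat poly \<Rightarrow> rat" where "L p = (\<Sum>k\<le>degree p. genocchi k * coeff p k)"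

lemma L_eq: "degree p \<le> N \<Longrightarrow> L p = (\<Sum>k\<le>N. genocchi k * coeff p k)"
  unfolding L_def by (rule sum.mono_neutral_left) (auto simp: coeff_eq_0)

lemma L_add: "L (p + q) = L p + L q"
proof -
  let ?N = "max (degree p) (degree q)"
  have "degree (p + q) \<le> ?N" by (rule degree_add_le) auto
  then show ?thesis by (simp add: L_eq[of _ ?N] sum.distrib distrib_left)
qed

lemma L_smult: "L (smult c p) = c * L p"
  by (simp add: L_eq[of _ "degree p"] sum_distrib_left algebra_simps)

lemma L_sum: "finite A \<Longrightarrow> L (sum f A) = (\<Sum>i\<in>A. L (f i))"
  by (induction A rule: finite_induct) (simp_all add: L_add, simp add: L_def)

lemma L_monom: "L (monom c i) = c * genocchi i"
proof -
  have "L (monom c i) = (\<Sum>k\<le>i. genocchi k * coeff (monom c i) k)"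
    by (rule L_eq) (simp add: degree_monom_le)
  also have "\<dots> = (\<Sum>k\<le>i. if k = i then genocchi k * c else 0)"
    by (rule sum.cong) (auto simp: coeff_monom)
  finally show ?thesis by simp
qed

lemma L_lin_pow: "L ([:1,1:] ^ i) = (\<Sum>j\<le>i. of_nat (i choose j) * genocchi j)"
proof -
  have "degree ([:1,1:] ^ i :: rat poly) \<le> i"
    by (metis degree_linear_power order_refl)
  then show ?thesis by (simp add: L_eq[of _ i] coeff_linear_poly_power mult.commute)
qed

lemma pcompose_monom: "pcompose (monom c i) q = smult c (q ^ i)"
  by (induction i) (simp_all add: monom_altdef pcompose_smult pcompose_mult pcompose_pCons)

lemma L_shift: "L (pcompose p [:1,1:]) + L p = 2 * coeff p 1"
proof -
  define d where "d = degree p"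
  have p: "p = (\<Sum>i\<le>d. monom (coeff p i) i)" unfolding d_def by (simp add: poly_as_sum_of_monoms)
  have "L (pcompose p [:1,1:]) + L p =
      (\<Sum>i\<le>d. coeff p i * (L ([:1,1:] ^ i) + genocchi i))"
    by (subst (1 2) p) (simp add: pcompose_sum L_sum pcompose_monom L_smult L_monom
        algebra_simps sum.distrib del: power_Suc)
  also have "\<dots> = (\<Sum>i\<le>d. coeff p i * (if i = 1 then 2 else 0))"
    by (simp add: L_lin_pow gen_rec)
  also have "\<dots> = 2 * coeff p 1"
  proof (cases "d = 0")
    case True
    then show ?thesis using d_def coeff_eq_0[of p 1] by simp
  next
    case False
    then show ?thesis by (simp add: sum.delta mult.commute if_distrib[of "\<lambda>x. coeff p _ * x"] cong: if_cong)
  qed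
  finally show ?thesis .
qed

lemma b_sum: "L (P n) = (\<Sum>k=0..n. genocchi k * of_int (stirling1s n k))"
  by (simp add: L_eq[OF P_deg] stir atLeast0AtMost)

lemma G0: "genocchi 0 = 0" using gen_rec[of 0] by simp

lemma b0: "L (P 0) = 0" by (simp add: P_def L_def G0)

lemma b_rec: "2 * L (P (Suc n)) + of_nat (Suc n) * L (P n) = 2 * (-1)^n * fact n"
  using L_shift[of "P (Suc n)"] P_coeff1[of n] by (simp add: P_shift L_add L_smult del: of_nat_Suc)

lemma a_rec: "2 * seq_a (Suc (Suc m)) = (m + 2) * seq_a (Suc m) + 2 * fact (Suc m)"
proof -
  define T where "T k = (fact k * fact (Suc m - k) :: nat)" for k :: nat
  have aS: "seq_a (Suc (Suc m)) = (\<Sum>k\<le>Suc m. T k)"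
    by (simp add: seq_a_def T_def atLeast0AtMost)
  have a1: "seq_a (Suc m) = (\<Sum>k<Suc m. fact k * fact (m - k))"
    by (simp add: seq_a_def atLeast0AtMost lessThan_Suc_atMost)
  have tk: "(m + 2) * (fact k * fact (m - k)) = T (Suc k) + T k" if "k < Suc m" for k
  proof -
    have e: "Suc m - k = Suc (m - k)" using that by simp
    have "(m + 2) * (fact k * fact (m - k)) = (Suc k + Suc (m - k)) * (fact k * fact (m - k))"
      using that by simp
    also have "\<dots> = fact (Suc k) * fact (m - k) + fact k * fact (Suc (m - k))"
      by (simp add: algebra_simps)
    finally show ?thesis unfolding T_def e by simp
  qed
  have "(m + 2) * seq_a (Suc m) = (\<Sum>k<Suc m. (m + 2) * (fact k * fact (m - k)))"
    unfolding a1 sum_distrib_left ..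
  also have "\<dots> = (\<Sum>k<Suc m. T (Suc k) + T k)"
    by (intro sum.cong refl tk) simp
  also have "\<dots> = (\<Sum>k<Suc m. T (Suc k)) + (\<Sum>k<Suc m. T k)"
    by (rule sum.distrib)
  finally have A: "(m + 2) * seq_a (Suc m) = (\<Sum>k<Suc m. T (Suc k)) + (\<Sum>k<Suc m. T k)" .
  have B: "(\<Sum>k<Suc m. T (Suc k)) + T 0 = (\<Sum>k\<le>Suc m. T k)"
    by (simp only: lessThan_Suc_atMost sum.atMost_Suc_shift add.commute)
  have C: "(\<Sum>k<Suc m. T k) + T (Suc m) = (\<Sum>k\<le>Suc m. T k)"
    by (simp only: lessThan_Suc_atMost[symmetric] sum.lessThan_Suc)
  have "T 0 = fact (Suc m)" "T (Suc m) = fact (Suc m)" by (simp_all add: T_def)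
  with A B C aS show ?thesis by linarith
qed

lemma a_rec': "2 * (of_nat (seq_a (Suc n)) :: rat) = of_nat (Suc n) * of_nat (seq_a n) + 2 * fact n"
proof (cases n)
  case 0 then show ?thesis by (simp add: seq_a_def)
next
  case (Suc m)
  have "of_nat (2 * seq_a (Suc (Suc m))) = (of_nat ((m + 2) * seq_a (Suc m) + 2 * fact (Suc m)) :: rat)"
    by (simp only: a_rec)
  then show ?thesis using Suc by (simp add: of_nat_mult algebra_simps)
qed

lemma main: "(of_nat (seq_a n) :: rat) = - ((-1)^n * L (P n))"
proof (induction n)
  case 0 then show ?case by (simp add: seq_a_def b0)
next
  case (Suc n)
  have "2 * (of_nat (seq_a (Suc n)) :: rat) = of_nat (Suc n) * of_nat (seq_a n) + 2 * fact n" by (rule a_rec')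
  also have "\<dots> = 2 * (- ((-1)^(Suc n) * L (P (Suc n))))"
  proof -
    have s: "(-1::rat)^n * (-1)^n = 1" by (simp flip: power_add)
    have "(-1)^n * (2 * L (P (Suc n)) + of_nat (Suc n) * L (P n)) = (-1)^n * (2 * (-1)^n * fact n)"
      using b_rec[of n] by simp
    hence "(-1)^n * (2 * L (P (Suc n)) + of_nat (Suc n) * L (P n)) = 2 * fact n"
      using s by (simp add: algebra_simps)
    then show ?thesis using Suc.IH by (simp add: algebra_simps)
  qed
  finally show ?case by simp
qed

theorem corollary2:
  fixes n :: nat
  shows "(of_nat (seq_a n) :: rat) =
         (-1) ^ (n - 1) * (\<Sum>k=0..n. genocchi k * of_int (stirling1s n k))"
proof (cases n)
  case 0 then show ?thesis using b0 b_sum[of 0] by (simp add: seq_a_def)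
next
  case (Suc m)
  then show ?thesis using main[of n] b_sum[of n] by simp
qed
end
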